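(* Let $\mathfrak g$ be a nonsemisimple complex Lie algebra, $\mathfrak p$ a nonperfect ideal of $\mathfrak g$, and $\phi:\mathfrak p\to\mathbb C$ a Lie algebra homomorphism. Then every nonzero $\mathfrak p$-invariant subspace $M$ of $W(\phi)$ contains a nonzero vector $v$ with $pv=\phi(p)v$ for all $p\in\mathfrak p$.
   Context: A Lie algebra homomorphism $\phi:\mathfrak p\to\mathbb C$ is a linear map vanishing on $[\mathfrak p,\mathfrak p]$. Let $\mathbb C w_\phi$ be the one-dimensional $\mathfrak p$-module with $pw_\phi=\phi(p)w_\phi$, and $W(\phi)=\mathcal U(\mathfrak g)\otimes_{\mathcal U(\mathfrak p)}\mathbb C w_\phi$. *)

theory Defs
  imports Complex_Main
begin

locale lie_algebra = vector_space scale
  for scale :: "complex \<Rightarrow> 'g::ab_group_add \<Rightarrow> 'g" +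
  fixes br :: "'g \<Rightarrow> 'g \<Rightarrow> 'g"
  assumes br_add_left: "br (x + y) z = br x z + br y z"
    and br_add_right: "br x (y + z) = br x y + br x z"
    and br_scale_left: "br (scale c x) y = scale c (br x y)"
    and br_scale_right: "br x (scale c y) = scale c (br x y)"
    and br_alt: "br x x = 0"
    and jacobi: "br x (br y z) + br y (br z x) + br z (br x y) = 0"

definition fin_dim :: "(complex \<Rightarrow> 'g::ab_group_add \<Rightarrow> 'g) \<Rightarrow> bool" where
  "fin_dim scale \<longleftrightarrow> (\<exists>B. finite B \<and> module.span scale B = UNIV)"

definition brset :: "('g \<Rightarrow> 'g \<Rightarrow> 'g) \<Rightarrow> 'g set \<Rightarrow> 'g set \<Rightarrow> 'g set" where
  "brset br A B = {br x y | x y. x \<in> A \<and> y \<in> B}"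

definition lie_bracket_space ::
  "(complex \<Rightarrow> 'g::ab_group_add \<Rightarrow> 'g) \<Rightarrow> ('g \<Rightarrow> 'g \<Rightarrow> 'g) \<Rightarrow> 'g set \<Rightarrow> 'g set \<Rightarrow> 'g set" where
  "lie_bracket_space scale br A B = module.span scale (brset br A B)"

definition lie_ideal ::
  "(complex \<Rightarrow> 'g::ab_group_add \<Rightarrow> 'g) \<Rightarrow> ('g \<Rightarrow> 'g \<Rightarrow> 'g) \<Rightarrow> 'g set \<Rightarrow> bool" where
  "lie_ideal scale br I \<longleftrightarrow> module.subspace scale I \<and> (\<forall>x y. y \<in> I \<longrightarrow> br x y \<in> I)"

fun derived_series ::
  "(complex \<Rightarrow> 'g::ab_group_add \<Rightarrow> 'g) \<Rightarrow> ('g \<Rightarrow> 'g \<Rightarrow> 'g) \<Rightarrow> 'g set \<Rightarrow> nat \<Rightarrow> 'g set" where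
  "derived_series scale br I 0 = I"
| "derived_series scale br I (Suc n) =
     lie_bracket_space scale br (derived_series scale br I n) (derived_series scale br I n)"

definition solvable_ideal ::
  "(complex \<Rightarrow> 'g::ab_group_add \<Rightarrow> 'g) \<Rightarrow> ('g \<Rightarrow> 'g \<Rightarrow> 'g) \<Rightarrow> 'g set \<Rightarrow> bool" where
  "solvable_ideal scale br I \<longleftrightarrow> lie_ideal scale br I \<and> (\<exists>n. derived_series scale br I n = {0})"

definition semisimple_lie ::
  "(complex \<Rightarrow> 'g::ab_group_add \<Rightarrow> 'g) \<Rightarrow> ('g \<Rightarrow> 'g \<Rightarrow> 'g) \<Rightarrow> bool" where
  "semisimple_lie scale br \<longleftrightarrow> (\<forall>I. solvable_ideal scale br I \<longrightarrow> I = {0})"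

definition perfect_ideal ::
  "(complex \<Rightarrow> 'g::ab_group_add \<Rightarrow> 'g) \<Rightarrow> ('g \<Rightarrow> 'g \<Rightarrow> 'g) \<Rightarrow> 'g set \<Rightarrow> bool" where
  "perfect_ideal scale br P \<longleftrightarrow> lie_bracket_space scale br P P = P"

text \<open>Lie algebra homomorphism P \<rightarrow> C: linear on P, vanishing on [P,P].\<close>
definition lie_char ::
  "(complex \<Rightarrow> 'g::ab_group_add \<Rightarrow> 'g) \<Rightarrow> ('g \<Rightarrow> 'g \<Rightarrow> 'g) \<Rightarrow> 'g set \<Rightarrow> ('g \<Rightarrow> complex) \<Rightarrow> bool" where
  "lie_char scale br P \<phi> \<longleftrightarrow>
     (\<forall>x\<in>P. \<forall>y\<in>P. \<phi> (x + y) = \<phi> x + \<phi> y)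
   \<and> (\<forall>c. \<forall>x\<in>P. \<phi> (scale c x) = c * \<phi> x)
   \<and> (\<forall>x\<in>lie_bracket_space scale br P P. \<phi> x = 0)"

text \<open>Elements: finitely supported functions on words; product = concatenation convolution.\<close>
type_synonym 'g fa = "'g list \<Rightarrow> complex"

definition fa_elems :: "'g fa set" where
  "fa_elems = {f. finite {xs. f xs \<noteq> 0}}"

definition fa_zero :: "'g fa" where "fa_zero = (\<lambda>_. 0)"
definition fa_one :: "'g fa" where "fa_one = (\<lambda>xs. if xs = [] then 1 else 0)"
definition fa_gen :: "'g \<Rightarrow> 'g fa" where "fa_gen x = (\<lambda>xs. if xs = [x] then 1 else 0)"
definition fa_add :: "'g fa \<Rightarrow> 'g fa \<Rightarrow> 'g fa" where "fa_add f h = (\<lambda>xs. f xs + h xs)"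
definition fa_diff :: "'g fa \<Rightarrow> 'g fa \<Rightarrow> 'g fa" where "fa_diff f h = (\<lambda>xs. f xs - h xs)"
definition fa_smul :: "complex \<Rightarrow> 'g fa \<Rightarrow> 'g fa" where "fa_smul c f = (\<lambda>xs. c * f xs)"
definition fa_mult :: "'g fa \<Rightarrow> 'g fa \<Rightarrow> 'g fa" where
  "fa_mult f h = (\<lambda>zs. \<Sum>i\<le>length zs. f (take i zs) * h (drop i zs))"

text \<open>Defining relations of U(g) as a quotient of the free algebra on g.\<close>
definition U_rels ::
  "(complex \<Rightarrow> 'g::ab_group_add \<Rightarrow> 'g) \<Rightarrow> ('g \<Rightarrow> 'g \<Rightarrow> 'g) \<Rightarrow> 'g fa set" where
  "U_rels scale br =
     {fa_diff (fa_gen (x + y)) (fa_add (fa_gen x) (fa_gen y)) | x y. True}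
   \<union> {fa_diff (fa_gen (scale c x)) (fa_smul c (fa_gen x)) | c x. True}
   \<union> {fa_diff (fa_diff (fa_mult (fa_gen x) (fa_gen y)) (fa_mult (fa_gen y) (fa_gen x)))
              (fa_gen (br x y)) | x y. True}"

text \<open>Kernel of the surjection  FreeAlg(g) \<rightarrow> U(g) \<rightarrow> W(phi) = U(g) \<otimes>_{U(p)} C w_phi = U(g)/U(g){p - phi(p)}:
  the two-sided ideal generated by U_rels plus the left ideal generated by p - phi(p).\<close>
inductive_set W_ker ::
  "(complex \<Rightarrow> 'g::ab_group_add \<Rightarrow> 'g) \<Rightarrow> ('g \<Rightarrow> 'g \<Rightarrow> 'g) \<Rightarrow> 'g set \<Rightarrow> ('g \<Rightarrow> complex) \<Rightarrow> 'g fa set"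
  for scale br P \<phi> where
  zero: "fa_zero \<in> W_ker scale br P \<phi>"
| add: "a \<in> W_ker scale br P \<phi> \<Longrightarrow> b \<in> W_ker scale br P \<phi> \<Longrightarrow> fa_add a b \<in> W_ker scale br P \<phi>"
| smul: "a \<in> W_ker scale br P \<phi> \<Longrightarrow> fa_smul c a \<in> W_ker scale br P \<phi>"
| rel: "r \<in> U_rels scale br \<Longrightarrow> a \<in> fa_elems \<Longrightarrow> b \<in> fa_elems \<Longrightarrow>
        fa_mult (fa_mult a r) b \<in> W_ker scale br P \<phi>"
| ind: "p \<in> P \<Longrightarrow> a \<in> fa_elems \<Longrightarrow>
        fa_mult a (fa_diff (fa_gen p) (fa_smul (\<phi> p) fa_one)) \<in> W_ker scale br P \<phi>"

end

theory Submission
  imports Defs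
begin

definition fcons :: "'g \<Rightarrow> 'g fa \<Rightarrow> 'g fa" where
  "fcons x f = (\<lambda>zs. case zs of [] \<Rightarrow> 0 | z # zs' \<Rightarrow> (if z = x then f zs' else 0))"

definition word :: "'g list \<Rightarrow> 'g fa" where
  "word w = (\<lambda>zs. if zs = w then 1 else 0)"

lemma fa_mult_cons: "fa_mult (fcons x a) h = fcons x (fa_mult a h)"
proof (rule ext)
  fix zs :: "'a list"
  show "fa_mult (fcons x a) h zs = fcons x (fa_mult a h) zs"
  proof (cases zs)
    case Nil
    then show ?thesis by (simp add: fa_mult_def fcons_def)
  next
    case (Cons z zs')
    then show ?thesis
      by (simp add: fa_mult_def fcons_def sum.atMost_Suc_shift del: sum.atMost_Suc)
  qed
qed

lemma fa_mult_one: "fa_mult fa_one h = h"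
proof (rule ext)
  fix zs :: "'a list"
  show "fa_mult fa_one h zs = h zs"
  proof (cases zs)
    case Nil
    then show ?thesis by (simp add: fa_mult_def fa_one_def)
  next
    case (Cons z zs')
    then show ?thesis
      by (simp add: fa_mult_def fa_one_def sum.atMost_Suc_shift del: sum.atMost_Suc)
  qed
qed

lemma fa_mult_diff_left: "fa_mult (fa_diff f g) h = fa_diff (fa_mult f h) (fa_mult g h)"
  by (simp add: fa_mult_def fa_diff_def sum_subtractf left_diff_distrib)

lemma fa_gen_cons: "fa_gen x = fcons x fa_one"
  by (rule ext) (simp add: fa_gen_def fcons_def fa_one_def split: list.split)

lemma fa_mult_gen: "fa_mult (fa_gen x) h = fcons x h"
  by (simp add: fa_gen_cons fa_mult_cons fa_mult_one)

lemma word_Nil: "word [] = fa_one"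
  by (rule ext) (simp add: word_def fa_one_def)

lemma word_Cons: "word (x # ys) = fcons x (word ys)"
  by (rule ext) (simp add: word_def fcons_def split: list.split)

lemma word_elems: "word w \<in> fa_elems"
proof -
  have "{xs. word w xs \<noteq> 0} \<subseteq> {w}" by (auto simp: word_def)
  then show ?thesis unfolding fa_elems_def using finite_subset by blast
qed

lemma fa_one_elems: "fa_one \<in> fa_elems"
  using word_elems[of "[]"] by (simp add: word_Nil)

lemma fcons_elems: assumes "a \<in> fa_elems" shows "fcons x a \<in> fa_elems"
proof -
  have "{zs. fcons x a zs \<noteq> 0} \<subseteq> (\<lambda>ys. x # ys) ` {ys. a ys \<noteq> 0}"
  proof
    fix zs assume "zs \<in> {zs. fcons x a zs \<noteq> 0}"
    then show "zs \<in> (\<lambda>ys. x # ys) ` {ys. a ys \<noteq> 0}"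
      by (cases zs) (auto simp: fcons_def split: if_splits)
  qed
  moreover have "finite ((\<lambda>ys. x # ys) ` {ys. a ys \<noteq> 0})"
    using assms by (simp add: fa_elems_def)
  ultimately show ?thesis unfolding fa_elems_def using finite_subset by blast
qed

lemma fcons_add: "fcons x (fa_add a b) = fa_add (fcons x a) (fcons x b)"
  by (rule ext) (simp add: fcons_def fa_add_def split: list.split)

lemma fcons_smul: "fcons x (fa_smul c a) = fa_smul c (fcons x a)"
  by (rule ext) (simp add: fcons_def fa_smul_def split: list.split)

lemma fcons_diff: "fcons x (fa_diff a b) = fa_diff (fcons x a) (fcons x b)"
  by (rule ext) (simp add: fcons_def fa_diff_def split: list.split)

lemma fcons_zero: "fcons x fa_zero = fa_zero"
  by (rule ext) (simp add: fcons_def fa_zero_def split: list.split)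

lemma W_ker_fcons: "k \<in> W_ker scale br P \<phi> \<Longrightarrow> fcons x k \<in> W_ker scale br P \<phi>"
proof (induction rule: W_ker.induct)
  case zero
  then show ?case by (simp add: fcons_zero W_ker.zero)
next
  case (add a b)
  then show ?case by (simp add: fcons_add W_ker.add)
next
  case (smul a c)
  then show ?case by (simp add: fcons_smul W_ker.smul)
next
  case (rel r a b)
  then show ?case
    by (metis fa_mult_cons fcons_elems W_ker.rel)
next
  case (ind p a)
  then show ?case
    by (metis fa_mult_cons fcons_elems W_ker.ind)
qed

lemma W_ker_diff: "a \<in> W_ker scale br P \<phi> \<Longrightarrow> b \<in> W_ker scale br P \<phi> \<Longrightarrow>
   fa_diff a b \<in> W_ker scale br P \<phi>"
proof -
  assume a: "a \<in> W_ker scale br P \<phi>" and b: "b \<in> W_ker scale br P \<phi>"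
  have "fa_diff a b = fa_add a (fa_smul (-1) b)"
    by (rule ext) (simp add: fa_diff_def fa_add_def fa_smul_def)
  then show ?thesis using a b by (simp add: W_ker.add W_ker.smul)
qed

definition Lop :: "('g \<Rightarrow> complex) \<Rightarrow> 'g \<Rightarrow> 'g fa \<Rightarrow> 'g fa" where
  "Lop \<phi> q f = fa_diff (fcons q f) (fa_smul (\<phi> q) f)"

definition Tset :: "(complex \<Rightarrow> 'g::ab_group_add \<Rightarrow> 'g) \<Rightarrow> ('g \<Rightarrow> 'g \<Rightarrow> 'g) \<Rightarrow> 'g set \<Rightarrow>
   ('g \<Rightarrow> complex) \<Rightarrow> nat \<Rightarrow> 'g fa set" where
  "Tset scale br P \<phi> n = {h. \<exists>g k. (\<forall>zs. n \<le> length zs \<longrightarrow> g zs = 0) \<and>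
      k \<in> W_ker scale br P \<phi> \<and> h = fa_add g k}"

lemma word_claim:
  assumes ideal: "\<forall>x y. y \<in> P \<longrightarrow> br x y \<in> P"
  shows "q \<in> P \<Longrightarrow> Lop \<phi> q (word w) \<in> Tset scale br P \<phi> (length w)"
proof (induction w arbitrary: q)
  case Nil
  have "fa_diff (fa_gen q) (fa_smul (\<phi> q) fa_one) \<in> W_ker scale br P \<phi>"
    using W_ker.ind[OF Nil fa_one_elems, where scale=scale and br=br and \<phi>=\<phi>] by (simp add: fa_mult_one)
  moreover have "Lop \<phi> q (word []) = fa_add fa_zero (fa_diff (fa_gen q) (fa_smul (\<phi> q) fa_one))"
    by (rule ext) (simp add: Lop_def word_Nil fa_gen_cons fa_add_def fa_zero_def)
  ultimately show ?case unfolding Tset_def by (auto simp: fa_zero_def)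
next
  case (Cons x ys)
  define wys where "wys = word ys"
  define b where "b = br x q"
  have bP: "b \<in> P" using ideal Cons.prems b_def by blast
  obtain g1 k1 where g1: "\<forall>zs. length ys \<le> length zs \<longrightarrow> g1 zs = 0" and k1: "k1 \<in> W_ker scale br P \<phi>"
    and E1: "Lop \<phi> q wys = fa_add g1 k1"
    using Cons.IH[OF Cons.prems] unfolding Tset_def wys_def by blast
  obtain g2 k2 where g2: "\<forall>zs. length ys \<le> length zs \<longrightarrow> g2 zs = 0" and k2: "k2 \<in> W_ker scale br P \<phi>"
    and E2: "Lop \<phi> b wys = fa_add g2 k2"
    using Cons.IH[OF bP] unfolding Tset_def wys_def by blast
  define r where "r = fa_diff (fa_diff (fa_mult (fa_gen x) (fa_gen q)) (fa_mult (fa_gen q) (fa_gen x)))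
              (fa_gen (br x q))"
  have "r \<in> U_rels scale br" unfolding r_def U_rels_def by blast
  then have K: "fa_mult (fa_mult fa_one r) wys \<in> W_ker scale br P \<phi>"
    using W_ker.rel fa_one_elems word_elems wys_def by blast
  define K where "K = fa_mult (fa_mult fa_one r) wys"
  have E3: "K = fa_diff (fa_diff (fcons x (fcons q wys)) (fcons q (fcons x wys))) (fcons b wys)"
    unfolding K_def r_def b_def
    by (simp add: fa_mult_one fa_mult_diff_left fa_mult_gen fa_gen_cons fa_mult_cons)
  have E1': "fcons x (Lop \<phi> q wys) = fa_add (fcons x g1) (fcons x k1)"
    using E1 by (simp add: fcons_add)
  define G where "G = fa_add (fcons x g1) (fa_smul (-1) (fa_add (fa_smul (\<phi> b) wys) g2))"
  define Kp where "Kp = fa_add (fcons x k1) (fa_smul (-1) (fa_add k2 K))"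
  have "Kp \<in> W_ker scale br P \<phi>" unfolding Kp_def
    using K K_def k1 k2 by (simp add: W_ker.add W_ker.smul W_ker_fcons)
  moreover have "\<forall>zs. length (x # ys) \<le> length zs \<longrightarrow> G zs = 0"
  proof (intro allI impI)
    fix zs :: "'a list" assume le: "length (x # ys) \<le> length zs"
    have "fcons x g1 zs = 0"
      using le g1 by (cases zs) (auto simp: fcons_def)
    moreover have "wys zs = 0" using le by (auto simp: wys_def word_def)
    moreover have "g2 zs = 0" using le g2 by simp
    ultimately show "G zs = 0" by (simp add: G_def fa_add_def fa_smul_def)
  qed
  moreover have "Lop \<phi> q (word (x # ys)) = fa_add G Kp"
  proof (rule ext)
    fix zs
    have a1: "fcons x (fcons q wys) zs - \<phi> q * fcons x wys zs = fcons x g1 zs + fcons x k1 zs"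
      using fun_cong[OF E1', of zs] unfolding Lop_def fcons_diff fcons_smul by (simp add: fa_diff_def fa_smul_def fa_add_def)
    have a2: "fcons b wys zs - \<phi> b * wys zs = g2 zs + k2 zs"
      using fun_cong[OF E2, of zs] by (simp add: Lop_def fa_diff_def fa_smul_def fa_add_def)
    have a3: "K zs = fcons x (fcons q wys) zs - fcons q (fcons x wys) zs - fcons b wys zs"
      using fun_cong[OF E3, of zs] by (simp add: fa_diff_def)
    show "Lop \<phi> q (word (x # ys)) zs = fa_add G Kp zs"
      unfolding Lop_def word_Cons wys_def[symmetric] G_def Kp_def
      using a1 a2 a3 by (simp add: fa_diff_def fa_smul_def fa_add_def algebra_simps)
  qed
  ultimately show ?case unfolding Tset_def by blast
qed

lemma Lop_add: "Lop \<phi> q (fa_add a b) = fa_add (Lop \<phi> q a) (Lop \<phi> q b)"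
  unfolding Lop_def fcons_add by (rule ext) (simp add: fa_diff_def fa_add_def fa_smul_def algebra_simps)

lemma Lop_smul: "Lop \<phi> q (fa_smul c a) = fa_smul c (Lop \<phi> q a)"
  unfolding Lop_def fcons_smul by (rule ext) (simp add: fa_diff_def fa_smul_def algebra_simps)

lemma Tset_add: "a \<in> Tset scale br P \<phi> n \<Longrightarrow> b \<in> Tset scale br P \<phi> n \<Longrightarrow>
   fa_add a b \<in> Tset scale br P \<phi> n"
proof -
  assume "a \<in> Tset scale br P \<phi> n" "b \<in> Tset scale br P \<phi> n"
  then obtain g1 k1 g2 k2 where g: "\<forall>zs. n \<le> length zs \<longrightarrow> g1 zs = 0" "\<forall>zs. n \<le> length zs \<longrightarrow> g2 zs = 0"
    and k: "k1 \<in> W_ker scale br P \<phi>" "k2 \<in> W_ker scale br P \<phi>"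
    and e: "a = fa_add g1 k1" "b = fa_add g2 k2" unfolding Tset_def by blast
  have "fa_add a b = fa_add (fa_add g1 g2) (fa_add k1 k2)"
    using e by (auto simp: fa_add_def)
  moreover have "\<forall>zs. n \<le> length zs \<longrightarrow> fa_add g1 g2 zs = 0" using g by (simp add: fa_add_def)
  ultimately show ?thesis unfolding Tset_def using k W_ker.add by blast
qed

lemma Tset_smul: "a \<in> Tset scale br P \<phi> n \<Longrightarrow> fa_smul c a \<in> Tset scale br P \<phi> n"
proof -
  assume "a \<in> Tset scale br P \<phi> n"
  then obtain g1 k1 where g: "\<forall>zs. n \<le> length zs \<longrightarrow> g1 zs = 0"
    and k: "k1 \<in> W_ker scale br P \<phi>"
    and e: "a = fa_add g1 k1" unfolding Tset_def by blast
  have "fa_smul c a = fa_add (fa_smul c g1) (fa_smul c k1)"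
    using e by (auto simp: fa_add_def fa_smul_def algebra_simps)
  moreover have "\<forall>zs. n \<le> length zs \<longrightarrow> fa_smul c g1 zs = 0" using g by (simp add: fa_smul_def)
  ultimately show ?thesis unfolding Tset_def using k W_ker.smul by blast
qed

lemma Tset_mono: "a \<in> Tset scale br P \<phi> m \<Longrightarrow> m \<le> n \<Longrightarrow> a \<in> Tset scale br P \<phi> n"
proof -
  assume a: "a \<in> Tset scale br P \<phi> m" and mn: "m \<le> n"
  then obtain g1 k1 where g: "\<forall>zs. m \<le> length zs \<longrightarrow> g1 zs = 0"
    and k: "k1 \<in> W_ker scale br P \<phi>"
    and e: "a = fa_add g1 k1" unfolding Tset_def by blast
  have "\<forall>zs. n \<le> length zs \<longrightarrow> g1 zs = 0" using g mn by simp
  then show ?thesis unfolding Tset_def using k e by blast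
qed

lemma gen_claim:
  assumes ideal: "\<forall>x y. y \<in> P \<longrightarrow> br x y \<in> P" and q: "q \<in> P"
  shows "finite S \<Longrightarrow> \<forall>f. {zs. f zs \<noteq> 0} \<subseteq> S \<longrightarrow> (\<forall>zs. n < length zs \<longrightarrow> f zs = 0) \<longrightarrow>
     Lop \<phi> q f \<in> Tset scale br P \<phi> n"
proof (induction S rule: finite_induct)
  case empty
  show ?case
  proof (intro allI impI)
    fix f :: "'a fa" assume "{zs. f zs \<noteq> 0} \<subseteq> {}"
    then have "f = fa_zero" by (auto simp: fa_zero_def)
    moreover have "Lop \<phi> q fa_zero = fa_add fa_zero fa_zero"
      unfolding Lop_def fcons_zero by (rule ext) (simp add: fa_add_def fa_diff_def fa_smul_def fa_zero_def)
    ultimately show "Lop \<phi> q f \<in> Tset scale br P \<phi> n"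
      unfolding Tset_def using W_ker.zero[where scale=scale and br=br and P=P and \<phi>=\<phi>]
      by (auto simp: fa_zero_def)
  qed
next
  case (insert w S)
  show ?case
  proof (intro allI impI)
    fix f :: "'a fa" assume sub: "{zs. f zs \<noteq> 0} \<subseteq> insert w S" and deg: "\<forall>zs. n < length zs \<longrightarrow> f zs = 0"
    define f' where "f' = f(w := 0)"
    have "{zs. f' zs \<noteq> 0} \<subseteq> S" using sub by (auto simp: f'_def)
    moreover have "\<forall>zs. n < length zs \<longrightarrow> f' zs = 0" using deg by (simp add: f'_def)
    ultimately have T1: "Lop \<phi> q f' \<in> Tset scale br P \<phi> n" using insert.IH by blast
    show "Lop \<phi> q f \<in> Tset scale br P \<phi> n"
    proof (cases "f w = 0")
      case True
      then have "f = f'" unfolding f'_def by (simp add: fun_upd_idem)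
      then show ?thesis using T1 by simp
    next
      case False
      then have "length w \<le> n" using deg by (meson not_le)
      then have T2: "Lop \<phi> q (word w) \<in> Tset scale br P \<phi> n"
        using word_claim[OF ideal q] Tset_mono by blast
      have "f = fa_add f' (fa_smul (f w) (word w))"
        by (rule ext) (simp add: f'_def fa_add_def fa_smul_def word_def)
      then have "Lop \<phi> q f = Lop \<phi> q (fa_add f' (fa_smul (f w) (word w)))"
        by (rule arg_cong)
      also have "\<dots> = fa_add (Lop \<phi> q f') (fa_smul (f w) (Lop \<phi> q (word w)))"
        by (simp only: Lop_add Lop_smul)
      finally show ?thesis using Tset_add[OF T1 Tset_smul[OF T2]] by simp
    qed
  qed
qed


theorem proposition3p2:
  fixes scale :: "complex \<Rightarrow> 'g::ab_group_add \<Rightarrow> 'g"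
    and br :: "'g \<Rightarrow> 'g \<Rightarrow> 'g"
    and P :: "'g set"
    and \<phi> :: "'g \<Rightarrow> complex"
    and M :: "'g fa set"
  assumes "lie_algebra scale br"
    and "fin_dim scale"
    and "\<not> semisimple_lie scale br"
    and "lie_ideal scale br P"
    and "\<not> perfect_ideal scale br P"
    and "lie_char scale br P \<phi>"
    and "W_ker scale br P \<phi> \<subseteq> M"
    and "M \<subseteq> fa_elems"
    and "\<forall>a\<in>M. \<forall>b\<in>M. fa_add a b \<in> M"
    and "\<forall>c. \<forall>a\<in>M. fa_smul c a \<in> M"
    and "\<forall>p\<in>P. \<forall>a\<in>M. fa_mult (fa_gen p) a \<in> M"
    and "M \<noteq> W_ker scale br P \<phi>"
  shows "\<exists>v\<in>M. v \<notin> W_ker scale br P \<phi> \<and>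
           (\<forall>p\<in>P. fa_diff (fa_mult (fa_gen p) v) (fa_smul (\<phi> p) v) \<in> W_ker scale br P \<phi>)"
proof -
  let ?W = "W_ker scale br P \<phi>"
  have ideal: "\<forall>x y. y \<in> P \<longrightarrow> br x y \<in> P" using assms(4) unfolding lie_ideal_def by blast
  define Q where "Q n = (\<exists>v\<in>M. v \<notin> ?W \<and> (\<forall>zs. n < length zs \<longrightarrow> v zs = 0))" for n
  obtain v0 where v0: "v0 \<in> M" "v0 \<notin> ?W" using assms(7,12) by blast
  define S where "S = {zs. v0 zs \<noteq> 0}"
  have finS: "finite S" using v0(1) assms(8) unfolding S_def fa_elems_def by blast
  have "Q (Max (length ` S))"
    unfolding Q_def
  proof (intro bexI[OF _ v0(1)] conjI allI impI)
    show "v0 \<notin> ?W" by (rule v0(2))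
    fix zs :: "'g list" assume "Max (length ` S) < length zs"
    then show "v0 zs = 0"
    proof (rule contrapos_pp)
      assume "v0 zs \<noteq> 0"
      then have "zs \<in> S" unfolding S_def by simp
      then have "length zs \<le> Max (length ` S)" using finS by simp
      then show "\<not> Max (length ` S) < length zs" by simp
    qed
  qed
  then have Qn: "Q (LEAST n. Q n)" by (rule LeastI)
  define n where "n = (LEAST n. Q n)"
  have minimal: "\<And>m. m < n \<Longrightarrow> \<not> Q m" unfolding n_def by (rule not_less_Least)
  obtain v where v: "v \<in> M" "v \<notin> ?W" and deg: "\<forall>zs. n < length zs \<longrightarrow> v zs = 0"
    using Qn unfolding Q_def n_def by blast
  have vfin: "finite {zs. v zs \<noteq> 0}" using v(1) assms(8) unfolding fa_elems_def by blast
  have minus: "\<And>a b. a \<in> M \<Longrightarrow> b \<in> M \<Longrightarrow> fa_diff a b \<in> M"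
  proof -
    fix a b assume "a \<in> M" "b \<in> M"
    moreover have "fa_diff a b = fa_add a (fa_smul (-1) b)"
      by (rule ext) (simp add: fa_diff_def fa_add_def fa_smul_def)
    ultimately show "fa_diff a b \<in> M" using assms(9,10) by metis
  qed
  show ?thesis
  proof (intro bexI[OF _ v(1)] conjI ballI)
    show "v \<notin> ?W" by (rule v(2))
    fix p assume p: "p \<in> P"
    define d where "d = fa_diff (fa_mult (fa_gen p) v) (fa_smul (\<phi> p) v)"
    have dM: "d \<in> M" unfolding d_def using minus assms(10,11) p v(1) by blast
    have "d = Lop \<phi> p v" unfolding d_def Lop_def fa_mult_gen ..
    then have "d \<in> Tset scale br P \<phi> n"
      using gen_claim[OF ideal p vfin] deg by blast
    then obtain g k where g: "\<forall>zs. n \<le> length zs \<longrightarrow> g zs = 0" and k: "k \<in> ?W"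
      and e: "d = fa_add g k" unfolding Tset_def by blast
    have gW: "g \<in> ?W"
    proof (cases n)
      case 0
      then have "g = fa_zero" using g by (auto simp: fa_zero_def)
      then show ?thesis using W_ker.zero by simp
    next
      case (Suc m)
      have "g = fa_diff d k" using e by (auto simp: fa_diff_def fa_add_def)
      then have gM: "g \<in> M" using minus dM k assms(7) by blast
      have "\<forall>zs. m < length zs \<longrightarrow> g zs = 0" using g Suc by simp
      then show ?thesis using minimal[of m] Suc gM unfolding Q_def by blast
    qed
    show "fa_diff (fa_mult (fa_gen p) v) (fa_smul (\<phi> p) v) \<in> ?W"
      using W_ker.add[OF gW k] e d_def by simp
  qed
qed

end
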